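(* Let $G$ be a group and $\mathcal{S}$ a 2-complex with vertices in $G$ such that $\mathcal{C}=Sc[\mathcal{S},G]$ is a commutative triplet structure. Then for every $g\in G$ the link of $g$ in $\mathcal{C}$ is isomorphic to the graph $G_{link}$ with vertex set $\{xy^{-1}:\{x,y\}\in\mathcal{T}\}$ in which $ac^{-1}\sim bc^{-1}$ for every triangle $\{a,b,c\}$ of $\mathcal{S}$ (for every labelling of its vertices).
   Context: For $\sigma\subseteq G$, $\sigma\cdot g=\{sg:s\in\sigma\}$; $Sc[\mathcal{S},G]=\{\sigma\cdot g:\sigma\in\mathcal{S},g\in G\}$. The link of a vertex $v$ of $\mathcal{C}$ is the graph with edge set $\{\sigma\setminus\{v\}:\sigma \text{ a triangle of }\mathcal{C},\ v\in\sigma\}$. $\mathcal{T}=\mathcal{S}(1)$ (2-sets contained in triangles of $\mathcal{S}$), $\mathcal{T}_o$ = ordered pairs $(t_1,t_2)$ with $\{t_1,t_2\}\in\mathcal{T}$. Commutative triplet structure: (0) $\{s,s^{-1}\}\notin\mathcal{T}$ for every vertex $s$; (A) every edge of $\mathcal{T}$ lies in exactly $\tilde d$ triangles of $\mathcal{S}$; (B) $ab=ba$ for $\{a,b\}\in\mathcal{T}$; (C) $\{a,b\}\in\mathcal{T}\iff\{a^{-1},b^{-1}\}\in\mathcal{T}$; (D) for $t\ne t'\in\mathcal{T}_o$, $t_1t_2^{-1}=t'_1(t'_2)^{-1}$ implies $t'_2=t_1^{-1}$, $t'_1=t_2^{-1}$; (E) the 1-skeleton of $\mathcal{S}$ is connected.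 *)

theory Defs
  imports "HOL-Algebra.Group"
begin

text \<open>A 2-complex with vertices in a group is modelled by its set of triangles
  (3-element subsets of the carrier).\<close>

definition right_translate :: "('a, 'b) monoid_scheme \<Rightarrow> 'a set \<Rightarrow> 'a \<Rightarrow> 'a set" where
  "right_translate G \<sigma> g = (\<lambda>s. s \<otimes>\<^bsub>G\<^esub> g) ` \<sigma>"

definition Sc :: "('a, 'b) monoid_scheme \<Rightarrow> 'a set set \<Rightarrow> 'a set set" where
  "Sc G S = {right_translate G \<sigma> g | \<sigma> g. \<sigma> \<in> S \<and> g \<in> carrier G}"

definition is_2complex :: "('a, 'b) monoid_scheme \<Rightarrow> 'a set set \<Rightarrow> bool" where
  "is_2complex G S \<longleftrightarrow> (\<forall>\<sigma>\<in>S. \<sigma> \<subseteq> carrier G \<and> card \<sigma> = 3)"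

definition vertices :: "'a set set \<Rightarrow> 'a set" where
  "vertices S = \<Union> S"

text \<open>T = S(1): the 2-sets contained in triangles of S.\<close>
definition edges1 :: "'a set set \<Rightarrow> 'a set set" where
  "edges1 S = {e. card e = 2 \<and> (\<exists>\<sigma>\<in>S. e \<subseteq> \<sigma>)}"

definition ordered_edges :: "'a set set \<Rightarrow> ('a \<times> 'a) set" where
  "ordered_edges S = {(a, b). {a, b} \<in> edges1 S}"

definition comm_triplet_structure :: "('a, 'b) monoid_scheme \<Rightarrow> 'a set set \<Rightarrow> nat \<Rightarrow> bool" where
  "comm_triplet_structure G S d \<longleftrightarrow>
     \<comment> \<open>(0)\<close>
     (\<forall>s\<in>vertices S. {s, inv\<^bsub>G\<^esub> s} \<notin> edges1 S) \<and>
     \<comment> \<open>(A)\<close>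
     (\<forall>e\<in>edges1 S. finite {\<sigma>\<in>S. e \<subseteq> \<sigma>} \<and> card {\<sigma>\<in>S. e \<subseteq> \<sigma>} = d) \<and>
     \<comment> \<open>(B)\<close>
     (\<forall>a b. {a, b} \<in> edges1 S \<longrightarrow> a \<otimes>\<^bsub>G\<^esub> b = b \<otimes>\<^bsub>G\<^esub> a) \<and>
     \<comment> \<open>(C)\<close>
     (\<forall>a\<in>carrier G. \<forall>b\<in>carrier G. {a, b} \<in> edges1 S \<longleftrightarrow> {inv\<^bsub>G\<^esub> a, inv\<^bsub>G\<^esub> b} \<in> edges1 S) \<and>
     \<comment> \<open>(D)\<close>
     (\<forall>t\<in>ordered_edges S. \<forall>t'\<in>ordered_edges S. t \<noteq> t' \<longrightarrow>
        fst t \<otimes>\<^bsub>G\<^esub> inv\<^bsub>G\<^esub> (snd t) = fst t' \<otimes>\<^bsub>G\<^esub> inv\<^bsub>G\<^esub> (snd t') \<longrightarrow>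
        snd t' = inv\<^bsub>G\<^esub> (fst t) \<and> fst t' = inv\<^bsub>G\<^esub> (snd t)) \<and>
     \<comment> \<open>(E): the 1-skeleton (vertices of S, edges T) is connected\<close>
     (\<forall>x\<in>vertices S. \<forall>y\<in>vertices S. (x, y) \<in> (ordered_edges S)\<^sup>*)"

text \<open>Simple graphs as pairs (vertex set, set of 2-element edges).\<close>
definition graph_iso :: "'a set \<times> 'a set set \<Rightarrow> 'c set \<times> 'c set set \<Rightarrow> bool" where
  "graph_iso G1 G2 \<longleftrightarrow> (\<exists>f. bij_betw f (fst G1) (fst G2) \<and>
      (\<forall>u\<in>fst G1. \<forall>v\<in>fst G1. {u, v} \<in> snd G1 \<longleftrightarrow> {f u, f v} \<in> snd G2))"

definition link :: "'a set set \<Rightarrow> 'a \<Rightarrow> 'a set \<times> 'a set set" where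
  "link C v = (let E = {\<sigma> - {v} | \<sigma>. \<sigma> \<in> C \<and> v \<in> \<sigma>} in (\<Union> E, E))"

definition G_link :: "('a, 'b) monoid_scheme \<Rightarrow> 'a set set \<Rightarrow> 'a set \<times> 'a set set" where
  "G_link G S =
     ({x \<otimes>\<^bsub>G\<^esub> inv\<^bsub>G\<^esub> y | x y. {x, y} \<in> edges1 S},
      {{a \<otimes>\<^bsub>G\<^esub> inv\<^bsub>G\<^esub> c, b \<otimes>\<^bsub>G\<^esub> inv\<^bsub>G\<^esub> c} | a b c.
          {a, b, c} \<in> S \<and> a \<noteq> b \<and> b \<noteq> c \<and> a \<noteq> c})"

end

theory Submission
  imports Defs
begin

lemma core:
  fixes G (structure) and S :: "'a set set"
  assumes grp: "group G" and cx: "is_2complex G S" and g: "g \<in> carrier G"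
  shows "snd (G_link G S) = (\<lambda>e. (\<lambda>v. v \<otimes> inv g) ` e) ` {\<sigma> - {g} | \<sigma>. \<sigma> \<in> Sc G S \<and> g \<in> \<sigma>}"
    (is "?E2 = ?img")
proof
  interpret group G by (rule grp)
  show "?E2 \<subseteq> ?img"
  proof
    fix e assume "e \<in> ?E2"
    then obtain a b c where e: "e = {a \<otimes> inv c, b \<otimes> inv c}" and abc: "{a,b,c} \<in> S"
      and d: "a \<noteq> b" "b \<noteq> c" "a \<noteq> c" by (auto simp: G_link_def)
    have car: "a \<in> carrier G" "b \<in> carrier G" "c \<in> carrier G"
      using cx abc by (auto simp: is_2complex_def)
    define h where "h = inv c \<otimes> g"
    have h: "h \<in> carrier G" using car g by (simp add: h_def)
    have ch: "c \<otimes> h = g" using car g by (simp add: h_def m_assoc[symmetric])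
    have hg: "h \<otimes> inv g = inv c" using car g by (simp add: h_def m_assoc)
    let ?s = "right_translate G {a,b,c} h"
    have s: "?s = {a \<otimes> h, b \<otimes> h, g}" using ch by (simp add: right_translate_def)
    have ne: "a \<otimes> h \<noteq> g" "b \<otimes> h \<noteq> g" unfolding ch[symmetric] using d car h by simp_all
    have "?s - {g} = {a \<otimes> h, b \<otimes> h}" using s ne by auto
    moreover have "(\<lambda>v. v \<otimes> inv g) ` {a \<otimes> h, b \<otimes> h} = e"
      using e car h g hg by (simp add: m_assoc)
    moreover have "?s \<in> Sc G S" using abc h by (auto simp: Sc_def)
    moreover have "g \<in> ?s" using s by simp
    ultimately show "e \<in> ?img" by blast
  qed
  show "?img \<subseteq> ?E2"
  proof
    fix e assume "e \<in> ?img"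
    then obtain \<sigma> h where sS: "\<sigma> \<in> S" and h: "h \<in> carrier G"
      and gin: "g \<in> right_translate G \<sigma> h"
      and e: "e = (\<lambda>v. v \<otimes> inv g) ` (right_translate G \<sigma> h - {g})"
      by (auto simp: Sc_def)
    have sc: "\<sigma> \<subseteq> carrier G" "card \<sigma> = 3" using cx sS by (auto simp: is_2complex_def)
    obtain c where c: "c \<in> \<sigma>" "g = c \<otimes> h" using gin by (auto simp: right_translate_def)
    have "card (\<sigma> - {c}) = 2" using sc c by (simp add: card_Diff_singleton)
    then obtain a b where ab: "\<sigma> - {c} = {a, b}" "a \<noteq> b" by (auto simp: card_2_iff)
    have sig: "\<sigma> = {a,b,c}" using ab c by auto
    have d: "b \<noteq> c" "a \<noteq> c" using ab by auto
    have car: "a \<in> carrier G" "b \<in> carrier G" "c \<in> carrier G" using sig sc by auto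
    have ne: "a \<otimes> h \<noteq> g" "b \<otimes> h \<noteq> g" unfolding c(2) using d car h by simp_all
    have "right_translate G \<sigma> h - {g} = {a \<otimes> h, b \<otimes> h}"
      using sig c ne by (auto simp: right_translate_def)
    moreover have hg: "h \<otimes> inv g = inv c" using car h c
      by (simp add: inv_mult_group m_assoc[symmetric])
    ultimately have "e = {a \<otimes> inv c, b \<otimes> inv c}" using e car h c by (simp add: m_assoc)
    then show "e \<in> ?E2" using sS sig ab(2) d by (auto simp: G_link_def)
  qed
qed

theorem mainTheorem8:
  fixes G (structure) and S :: "'a set set" and d :: nat
  assumes "group G"
    and "is_2complex G S"
    and "comm_triplet_structure G S d"
    and "g \<in> carrier G"
  shows "graph_iso (link (Sc G S) g) (G_link G S)"
proof -
  interpret group G by (rule assms(1))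
  define E1 where "E1 = {\<sigma> - {g} | \<sigma>. \<sigma> \<in> Sc G S \<and> g \<in> \<sigma>}"
  define f where "f = (\<lambda>v. v \<otimes> inv g)"
  have E2: "snd (G_link G S) = (\<lambda>e. f ` e) ` E1"
    using core[OF assms(1,2,4)] by (simp add: E1_def f_def)
  have lk: "link (Sc G S) g = (\<Union>E1, E1)" by (simp add: link_def E1_def Let_def)
  have E1car: "\<Union>E1 \<subseteq> carrier G"
    using assms(2) by (auto simp: E1_def Sc_def right_translate_def is_2complex_def)
  have inj: "inj_on f (carrier G)" unfolding f_def inj_on_def
    using assms(4) by simp
  have V2: "fst (G_link G S) = \<Union>(snd (G_link G S))"
  proof
    show "fst (G_link G S) \<subseteq> \<Union>(snd (G_link G S))"
    proof
      fix w assume "w \<in> fst (G_link G S)"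
      then obtain x y where w: "w = x \<otimes> inv y" and xy: "{x,y} \<in> edges1 S"
        by (auto simp: G_link_def)
      obtain \<sigma> where s: "\<sigma> \<in> S" "{x,y} \<subseteq> \<sigma>" "card {x,y} = 2"
        using xy by (auto simp: edges1_def)
      have sc: "card \<sigma> = 3" using assms(2) s by (auto simp: is_2complex_def)
      have "x \<noteq> y" using s(3) by (cases "x = y") auto
      have "card (\<sigma> - {y}) = 2" using sc s by (simp add: card_Diff_singleton)
      then obtain a b where ab: "\<sigma> - {y} = {a, b}" "a \<noteq> b" by (auto simp: card_2_iff)
      have "x \<in> {a,b}" using ab s \<open>x \<noteq> y\<close> by auto
      then obtain z where z: "\<sigma> - {y} = {x, z}" "x \<noteq> z" using ab by auto
      have sig: "\<sigma> = {x,z,y}" using z s by auto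
      have "z \<noteq> y" using z by auto
      then have "{x \<otimes> inv y, z \<otimes> inv y} \<in> snd (G_link G S)"
        using sig s z \<open>x \<noteq> y\<close> unfolding G_link_def by auto
      then show "w \<in> \<Union>(snd (G_link G S))" using w by auto
    qed
    show "\<Union>(snd (G_link G S)) \<subseteq> fst (G_link G S)"
    proof
      fix w assume "w \<in> \<Union>(snd (G_link G S))"
      then obtain a b c where w: "w = a \<otimes> inv c \<or> w = b \<otimes> inv c" and abc: "{a,b,c} \<in> S"
        and d: "a \<noteq> b" "b \<noteq> c" "a \<noteq> c" by (auto simp: G_link_def)
      have "{a,c} \<subseteq> {a,b,c}" "{b,c} \<subseteq> {a,b,c}" by auto
      then have "{a,c} \<in> edges1 S" "{b,c} \<in> edges1 S" using abc d unfolding edges1_def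
        by (simp_all, blast+)
      then show "w \<in> fst (G_link G S)" using w by (auto simp: G_link_def)
    qed
  qed
  have bij: "bij_betw f (\<Union>E1) (fst (G_link G S))"
    unfolding bij_betw_def using inj_on_subset[OF inj E1car] V2 E2 by auto
  have edge: "{u,v} \<in> E1 \<longleftrightarrow> {f u, f v} \<in> snd (G_link G S)"
    if "u \<in> \<Union>E1" "v \<in> \<Union>E1" for u v
  proof
    assume "{u,v} \<in> E1" then have "f ` {u,v} \<in> (\<lambda>e. f ` e) ` E1" by (rule imageI)
    then show "{f u, f v} \<in> snd (G_link G S)" using E2 by simp
  next
    assume "{f u, f v} \<in> snd (G_link G S)"
    then obtain e where e: "e \<in> E1" "{f u, f v} = f ` e" using E2 by auto
    have "e \<subseteq> carrier G" using e(1) E1car by auto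
    moreover have "{u,v} \<subseteq> carrier G" using that E1car by auto
    ultimately have "{u,v} = e" using e(2) inj_on_image_eq_iff[OF inj] by (metis image_empty image_insert)
    then show "{u,v} \<in> E1" using e by simp
  qed
  show ?thesis unfolding graph_iso_def lk using bij edge by auto
qed

end
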